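(* Let $M$ be a partial multiplication matrix and let $\pi^\#$ be an $M$-gridded permutation. Then $\pi^\#$ can be expressed as an $M$-sum of $M$-indivisible gridded permutations, $\pi^\#=\pi_1^\#\boxplus\cdots\boxplus\pi_k^\#$. Furthermore, any other expression $\pi^\#=\varphi_1^\#\boxplus\cdots\boxplus\varphi_{\ell}^\#$ of $\pi^\#$ as an $M$-sum of $M$-indivisible gridded permutations satisfies $k=\ell$ and $\{\varphi_1^\#,\dots,\varphi_\ell^\#\}=\{\pi_1^\#,\dots,\pi_k^\#\}$ as multisets.
   Context: A gridding matrix has entries in $\{0,1,-1\}$; an $m\times n$ one has $m$ columns, $n$ rows, $M_{ij}$ in column $i$ from the left and row $j$ from the bottom. An $M$-gridding of a permutation $\pi$ of length $L$ is a choice of vertical lines $\tfrac12=v_0\le\dots\le v_m=L+\tfrac12$ and horizontal lines $\tfrac12=h_0\le\dots\le h_n=L+\tfrac12$, not through points of $\pi$, such that in each cell $C_{ij}=\{v_{i-1}<x<v_i,\ h_{j-1}<y<h_j\}$ the points of $\pi$ are absent if $M_{ij}=0$, increasing if $M_{ij}=1$, decreasing if $M_{ij}=-1$; the result is an $M$-gridded permutation. Two $M$-gridded permutations are regarded as equal if they are order-isomorphic with corresponding points in cells with the same index. $M$ is a partial multiplication matrix: there are fixed $c_1,\dots,c_m,r_1,\dots,r_n\in\{\pm1\}$ with $M_{ij}=c_ir_j$ for each non-zero entry. Column $i$ is oriented left-to-right if $c_i=1$, right-to-left otherwise; row $j$ bottom-to-top if $r_j=1$, top-to-bottom otherwise.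 $M$-sum: for $M$-gridded $\sigma^\#,\tau^\#$, $\sigma^\#\boxplus\tau^\#$ is the $M$-gridded permutation whose points are those of $\sigma^\#$ and $\tau^\#$, each in the cell it occupied, with the relative order (in position and value) among points of $\sigma^\#$ and among points of $\tau^\#$ unchanged, and such that in every column of cells all points of $\sigma^\#$ precede all points of $\tau^\#$ in the column's orientation and in every row of cells all points of $\sigma^\#$ precede all points of $\tau^\#$ in the row's orientation. This operation is associative. $\pi^\#$ is $M$-divisible if $\pi^\#=\sigma^\#\boxplus\tau^\#$ with $\sigma^\#,\tau^\#$ non-empty, and $M$-indivisible otherwise. *)

theory Defs
  imports Main "HOL-Library.Multiset"
begin

text \<open>Gridding matrix: M i j is the entry in column i (from the left, 0-based) and
  row j (from the bottom, 0-based); an m x n matrix has columns 0..<m and rows 0..<n.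

  A gridded permutation is represented canonically (i.e. up to order-isomorphism
  preserving cells) as a list: the entry at index x (position x, 0-based) is
  (value, (column of cell, row of cell)).\<close>

type_synonym gperm = "(nat \<times> (nat \<times> nat)) list"

definition gval :: "gperm \<Rightarrow> nat \<Rightarrow> nat" where
  "gval p x = fst (p ! x)"

definition gcol :: "gperm \<Rightarrow> nat \<Rightarrow> nat" where
  "gcol p x = fst (snd (p ! x))"

definition grow :: "gperm \<Rightarrow> nat \<Rightarrow> nat" where
  "grow p x = snd (snd (p ! x))"

text \<open>Existence of vertical/horizontal grid lines placing each
  point in its recorded cell is equivalent to: cell columns weakly increase with position,
  cell rows weakly increase with value.\<close>
definition gridded :: "nat \<Rightarrow> nat \<Rightarrow> (nat \<Rightarrow> nat \<Rightarrow> int) \<Rightarrow> gperm \<Rightarrow> bool" where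
  "gridded m n M p \<longleftrightarrow>
     distinct (map fst p) \<and> set (map fst p) = {0..<length p} \<and>
     (\<forall>x<length p. gcol p x < m \<and> grow p x < n) \<and>
     (\<forall>x y. x < y \<and> y < length p \<longrightarrow> gcol p x \<le> gcol p y) \<and>
     (\<forall>x<length p. \<forall>y<length p. gval p x < gval p y \<longrightarrow> grow p x \<le> grow p y) \<and>
     (\<forall>x<length p. M (gcol p x) (grow p x) \<noteq> 0) \<and>
     (\<forall>x y. x < y \<and> y < length p \<and> snd (p ! x) = snd (p ! y) \<longrightarrow>
        (M (gcol p x) (grow p x) = 1 \<longrightarrow> gval p x < gval p y) \<and>
        (M (gcol p x) (grow p x) = -1 \<longrightarrow> gval p x > gval p y))"

definition std :: "gperm \<Rightarrow> gperm" where
  "std xs = map (\<lambda>(v, cl). (card {w \<in> fst ` set xs. w < v}, cl)) xs"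

text \<open>Binary M-sum with column orientations c and row orientations r:
  msum2 ... s t p  means  p = s \<boxplus> t.  The set A is the set of positions of p
  carrying the points of s.\<close>
definition msum2 :: "nat \<Rightarrow> nat \<Rightarrow> (nat \<Rightarrow> nat \<Rightarrow> int) \<Rightarrow> (nat \<Rightarrow> int) \<Rightarrow> (nat \<Rightarrow> int)
    \<Rightarrow> gperm \<Rightarrow> gperm \<Rightarrow> gperm \<Rightarrow> bool" where
  "msum2 m n M c r s t p \<longleftrightarrow>
     gridded m n M s \<and> gridded m n M t \<and> gridded m n M p \<and>
     (\<exists>A. A \<subseteq> {0..<length p} \<and>
        std (nths p A) = s \<and> std (nths p ({0..<length p} - A)) = t \<and>
        (\<forall>x\<in>A. \<forall>y\<in>{0..<length p} - A.
           (gcol p x = gcol p y \<longrightarrow>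
              (c (gcol p x) = 1 \<longrightarrow> x < y) \<and> (c (gcol p x) = -1 \<longrightarrow> y < x)) \<and>
           (grow p x = grow p y \<longrightarrow>
              (r (grow p x) = 1 \<longrightarrow> gval p x < gval p y) \<and>
              (r (grow p x) = -1 \<longrightarrow> gval p y < gval p x))))"

text \<open>Iterated M-sum  p = p1 \<boxplus> (p2 \<boxplus> (... \<boxplus> pk))  (bracketing irrelevant by
  associativity); the empty sum is the empty gridded permutation.\<close>
fun msum_list :: "nat \<Rightarrow> nat \<Rightarrow> (nat \<Rightarrow> nat \<Rightarrow> int) \<Rightarrow> (nat \<Rightarrow> int) \<Rightarrow> (nat \<Rightarrow> int)
    \<Rightarrow> gperm list \<Rightarrow> gperm \<Rightarrow> bool" where
  "msum_list m n M c r [] p \<longleftrightarrow> p = []"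
| "msum_list m n M c r (q # qs) p \<longleftrightarrow>
     (\<exists>u. msum_list m n M c r qs u \<and> msum2 m n M c r q u p)"

definition divisible :: "nat \<Rightarrow> nat \<Rightarrow> (nat \<Rightarrow> nat \<Rightarrow> int) \<Rightarrow> (nat \<Rightarrow> int) \<Rightarrow> (nat \<Rightarrow> int)
    \<Rightarrow> gperm \<Rightarrow> bool" where
  "divisible m n M c r p \<longleftrightarrow> (\<exists>s t. s \<noteq> [] \<and> t \<noteq> [] \<and> msum2 m n M c r s t p)"

text \<open>Indivisible summands are taken nonempty (otherwise empty summands could be
  inserted freely and uniqueness would fail).\<close>
definition indivisible :: "nat \<Rightarrow> nat \<Rightarrow> (nat \<Rightarrow> nat \<Rightarrow> int) \<Rightarrow> (nat \<Rightarrow> int) \<Rightarrow> (nat \<Rightarrow> int)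
    \<Rightarrow> gperm \<Rightarrow> bool" where
  "indivisible m n M c r p \<longleftrightarrow> gridded m n M p \<and> p \<noteq> [] \<and> \<not> divisible m n M c r p"

end

theory Submission
  imports Defs
begin

lemma sl_filter:
  assumes "S \<subseteq> {..<n}"
  shows "sorted_list_of_set S = filter (\<lambda>i. i \<in> S) [0..<n]"
proof -
  have fin: "finite S" using assms finite_subset by blast
  have "sorted_wrt (<) (filter (\<lambda>i. i \<in> S) [0..<n])"
    by (simp add: sorted_wrt_filter)
  moreover have "set (filter (\<lambda>i. i \<in> S) [0..<n]) = S" using assms by auto
  moreover have "distinct (filter (\<lambda>i. i \<in> S) [0..<n])" by simp
  ultimately show ?thesis
    using fin sorted_list_of_set_unique distinct_card by metis
qed

lemma nths_sl:
  assumes "S \<subseteq> {..<length p}"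
  shows "nths p S = map (nth p) (sorted_list_of_set S)"
proof -
  have "p = map (nth p) [0..<length p]" by (simp add: map_nth)
  then have "nths p S = map (nth p) (nths [0..<length p] S)"
    by (metis nths_map)
  moreover have "nths [0..<length p] S = filter (\<lambda>i. i \<in> S) [0..<length p]"
  proof -
    have "filter (\<lambda>i. i \<in> S) [0..<length p] = nths [0..<length p] {i. i < length [0..<length p] \<and> [0..<length p] ! i \<in> S}"
      by (rule filter_eq_nths)
    also have "{i. i < length [0..<length p] \<and> [0..<length p] ! i \<in> S} = S" using assms by auto
    finally show ?thesis by simp
  qed
  ultimately show ?thesis using sl_filter[OF assms] by simp
qed

lemma sl_image_mono:
  assumes "finite C" and "\<And>x y. x \<in> C \<Longrightarrow> y \<in> C \<Longrightarrow> x < y \<Longrightarrow> f x < f y"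
  shows "sorted_list_of_set (f ` C) = map f (sorted_list_of_set (C::nat set))"
proof -
  let ?l = "sorted_list_of_set C"
  have s: "sorted_wrt (<) ?l" by simp
  have "sorted_wrt (<) (map f ?l)"
    unfolding sorted_wrt_map by (rule sorted_wrt_mono_rel[OF _ s]) (use assms in auto)
  moreover have "set (map f ?l) = f ` C" using assms(1) by simp
  moreover have "inj_on f C" using assms(2)
    by (metis inj_onI linorder_neqE_nat order_less_irrefl)
  then have "length (map f ?l) = card (f ` C)" using assms(1) by (simp add: card_image)
  ultimately show ?thesis using assms(1)
    by (metis finite_imageI sorted_list_of_set_unique)
qed

definition stdp :: "gperm \<Rightarrow> bool" where
  "stdp xs \<longleftrightarrow> distinct (map fst xs) \<and> set (map fst xs) = {0..<length xs}"

definition iso :: "gperm \<Rightarrow> gperm \<Rightarrow> bool" where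
  "iso xs ys \<longleftrightarrow> length xs = length ys \<and> (\<forall>k<length xs. snd (xs!k) = snd (ys!k)) \<and>
     (\<forall>k<length xs. \<forall>l<length xs. fst (xs!k) < fst (xs!l) \<longleftrightarrow> fst (ys!k) < fst (ys!l))"

lemma length_std[simp]: "length (std xs) = length xs"
  by (simp add: std_def)

lemma std_nth: "k < length xs \<Longrightarrow> std xs ! k = (card {w \<in> fst ` set xs. w < fst (xs!k)}, snd (xs!k))"
  by (simp add: std_def case_prod_beta)

lemma card_less_lt:
  fixes S :: "nat set"
  assumes "finite S" "a \<in> S" "a < b"
  shows "card {w \<in> S. w < a} < card {w \<in> S. w < b}"
  by (rule psubset_card_mono) (use assms in auto)

lemma card_less_le:
  fixes S :: "nat set"
  assumes "finite S" "b \<le> a"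
  shows "card {w \<in> S. w < b} \<le> card {w \<in> S. w < a}"
  by (rule card_mono) (use assms in auto)

lemma std_iso: "iso (std xs) xs"
proof -
  let ?S = "fst ` set xs"
  have fin: "finite ?S" by simp
  { fix k l assume k: "k < length xs" and l: "l < length xs"
    have a: "fst (xs!k) \<in> ?S" "fst (xs!l) \<in> ?S" using k l by auto
    have "card {w \<in> ?S. w < fst (xs!k)} < card {w \<in> ?S. w < fst (xs!l)} \<longleftrightarrow> fst (xs!k) < fst (xs!l)"
      using card_less_lt[OF fin a(1)] card_less_le[OF fin] by (meson leI order.strict_iff_not)
  }
  then show ?thesis unfolding iso_def by (simp add: std_nth)
qed

lemma std_stdp:
  assumes d: "distinct (map fst xs)"
  shows "stdp (std xs)"
proof -
  let ?S = "fst ` set xs"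
  have cS: "card ?S = length xs" using d distinct_card by (metis set_map length_map)
  have dist: "distinct (map fst (std xs))"
  proof (subst distinct_conv_nth, intro allI impI)
    fix i j assume i: "i < length (map fst (std xs))" and j: "j < length (map fst (std xs))" and ij: "i \<noteq> j"
    have ne: "fst (xs!i) \<noteq> fst (xs!j)" using d i j ij by (simp add: distinct_conv_nth)
    have "fst (std xs ! i) \<noteq> fst (std xs ! j)"
      using std_iso[of xs] i j ne unfolding iso_def by (auto simp: linorder_neq_iff)
    then show "map fst (std xs) ! i \<noteq> map fst (std xs) ! j" using i j by simp
  qed
  have sub: "set (map fst (std xs)) \<subseteq> {0..<length xs}"
  proof
    fix v assume "v \<in> set (map fst (std xs))"
    then obtain k where k: "k < length xs" and v: "v = fst (std xs ! k)" by (auto simp: in_set_conv_nth)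
    have "{w \<in> ?S. w < fst (xs!k)} \<subset> ?S" using k by auto
    then have "card {w \<in> ?S. w < fst (xs!k)} < card ?S" by (simp add: psubset_card_mono)
    then show "v \<in> {0..<length xs}" using v k cS by (simp add: std_nth)
  qed
  have "card (set (map fst (std xs))) = length xs" using dist distinct_card by fastforce
  then have "set (map fst (std xs)) = {0..<length xs}" using sub
    by (simp add: card_subset_eq)
  then show ?thesis using dist unfolding stdp_def by simp
qed

lemma stdp_val:
  assumes s: "stdp xs" and k: "k < length xs"
  shows "fst (xs!k) = card {l. l < length xs \<and> fst (xs!l) < fst (xs!k)}"
proof -
  let ?g = "\<lambda>l. fst (xs!l)"
  have inj: "inj_on ?g {..<length xs}" using s[unfolded stdp_def] 
    unfolding inj_on_def by (metis distinct_conv_nth length_map nth_map lessThan_iff)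
  have rng: "?g ` {..<length xs} = {0..<length xs}"
  proof -
    have "?g ` {..<length xs} = set (map fst xs)" by (force simp: set_conv_nth)
    then show ?thesis using s unfolding stdp_def by simp
  qed
  have vk: "?g k < length xs" using k rng by auto
  have "?g ` {l. l < length xs \<and> ?g l < ?g k} = {0..<?g k}"
  proof -
    have "?g ` {l. l < length xs \<and> ?g l < ?g k} = {w \<in> ?g ` {..<length xs}. w < ?g k}" by auto
    also have "\<dots> = {0..<?g k}" using rng vk by auto
    finally show ?thesis .
  qed
  moreover have inj2: "inj_on ?g {l. l < length xs \<and> ?g l < ?g k}" using inj by (rule inj_on_subset) auto
  ultimately have "card {l. l < length xs \<and> ?g l < ?g k} = card {0..<?g k}"
    using card_image[OF inj2] by simp
  then have "card {l. l < length xs \<and> ?g l < ?g k} = ?g k" by simp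
  then show ?thesis by simp
qed

lemma iso_stdp_eq:
  assumes "stdp xs" "stdp ys" "iso xs ys"
  shows "xs = ys"
proof (rule nth_equalityI)
  show len: "length xs = length ys" using assms(3) by (simp add: iso_def)
  fix k assume k: "k < length xs"
  have "{l. l < length xs \<and> fst (xs!l) < fst (xs!k)} = {l. l < length ys \<and> fst (ys!l) < fst (ys!k)}"
    using assms(3) k unfolding iso_def by auto
  then have "fst (xs!k) = fst (ys!k)" using stdp_val[OF assms(1) k] stdp_val[OF assms(2)] k len by simp
  moreover have "snd (xs!k) = snd (ys!k)" using assms(3) k by (simp add: iso_def)
  ultimately show "xs!k = ys!k" by (simp add: prod_eq_iff)
qed

lemma iso_sym: "iso xs ys \<Longrightarrow> iso ys xs"
  unfolding iso_def by auto

lemma iso_trans: "iso xs ys \<Longrightarrow> iso ys zs \<Longrightarrow> iso xs zs"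
  unfolding iso_def by auto

lemma iso_std_eq:
  assumes "distinct (map fst xs)" "distinct (map fst ys)" "iso xs ys"
  shows "std xs = std ys"
  using iso_stdp_eq[OF std_stdp[OF assms(1)] std_stdp[OF assms(2)]]
    iso_trans[OF std_iso iso_trans[OF assms(3) iso_sym[OF std_iso]]] by blast

lemma gridded_stdp: "gridded m n M p \<Longrightarrow> stdp p"
  unfolding gridded_def stdp_def by simp

lemma stdp_std_id: "stdp p \<Longrightarrow> std p = p"
  using iso_stdp_eq[OF std_stdp _ std_iso] stdp_def by metis

definition emb :: "(nat \<Rightarrow> nat) \<Rightarrow> gperm \<Rightarrow> gperm \<Rightarrow> bool" where
  "emb f q p \<longleftrightarrow> (\<forall>k<length q. f k < length p) \<and> (\<forall>k l. k < l \<and> l < length q \<longrightarrow> f k < f l) \<and>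
     (\<forall>k<length q. snd (q!k) = snd (p!(f k))) \<and>
     (\<forall>k<length q. \<forall>l<length q. fst (q!k) < fst (q!l) \<longleftrightarrow> fst (p!(f k)) < fst (p!(f l)))"

lemma emb_lt: "emb f q p \<Longrightarrow> k < length q \<Longrightarrow> l < length q \<Longrightarrow> f k < f l \<longleftrightarrow> k < l"
  unfolding emb_def by (metis linorder_neqE_nat order_less_asym order_less_irrefl)

lemma emb_eq: "emb f q p \<Longrightarrow> k < length q \<Longrightarrow> l < length q \<Longrightarrow> f k = f l \<longleftrightarrow> k = l"
  using emb_lt by (metis linorder_neqE_nat order_less_irrefl)

lemma emb_nths:
  assumes "S \<subseteq> {..<length p}"
  shows "emb (\<lambda>k. sorted_list_of_set S ! k) (nths p S) p \<and> length (nths p S) = card S"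
proof -
  let ?l = "sorted_list_of_set S"
  have fin: "finite S" using assms finite_subset by blast
  have ns: "nths p S = map (nth p) ?l" by (rule nths_sl[OF assms])
  have len: "length ?l = card S" by simp
  have mem: "\<And>k. k < card S \<Longrightarrow> ?l ! k \<in> S"
    using fin len by (metis nth_mem sorted_list_of_set.set_sorted_key_list_of_set)
  have sw: "sorted_wrt (<) ?l" by simp
  show ?thesis unfolding emb_def ns
    using mem assms len sorted_wrt_nth_less[OF sw] by auto
qed

lemma emb_iso: "iso q' q \<Longrightarrow> emb f q p \<Longrightarrow> emb f q' p"
  unfolding iso_def emb_def by auto

lemma emb_distinct:
  assumes "emb f q p" "distinct (map fst p)"
  shows "distinct (map fst q)"
proof (subst distinct_conv_nth, intro allI impI)
  fix i j assume i: "i < length (map fst q)" and j: "j < length (map fst q)" and ij: "i \<noteq> j"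
  have "f i \<noteq> f j" using emb_eq[OF assms(1)] i j ij by simp
  then have "fst (p!(f i)) \<noteq> fst (p!(f j))" using assms i j unfolding emb_def
    by (simp add: distinct_conv_nth)
  then have "fst (q!i) \<noteq> fst (q!j)" using assms(1) i j unfolding emb_def
    by (auto simp: linorder_neq_iff)
  then show "map fst q ! i \<noteq> map fst q ! j" using i j by simp
qed

lemma emb_comp: "emb f q p \<Longrightarrow> emb g s q \<Longrightarrow> emb (f \<circ> g) s p"
  unfolding emb_def by auto

lemma std_nths_emb:
  assumes "distinct (map fst p)" "S \<subseteq> {..<length p}"
  shows "emb (\<lambda>k. sorted_list_of_set S ! k) (std (nths p S)) p \<and> length (std (nths p S)) = card S"
  using emb_nths[OF assms(2)] emb_iso[OF std_iso] by simp

lemma emb_std_nths: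
  assumes e: "emb f q p" and d: "distinct (map fst p)" and C: "C \<subseteq> {..<length q}"
  shows "std (nths q C) = std (nths p (f ` C))"
proof -
  have fin: "finite C" using C finite_subset by blast
  let ?l = "sorted_list_of_set C"
  have fC: "f ` C \<subseteq> {..<length p}" using e C unfolding emb_def by auto
  have sl: "sorted_list_of_set (f ` C) = map f ?l"
    by (rule sl_image_mono[OF fin]) (use e C in \<open>auto simp: emb_def\<close>)
  have n1: "nths q C = map (nth q) ?l" by (rule nths_sl[OF C])
  have n2: "nths p (f ` C) = map (nth p) (map f ?l)" using nths_sl[OF fC] sl by simp
  have mem: "\<And>k. k < length ?l \<Longrightarrow> ?l ! k < length q"
    using fin C by (metis lessThan_iff nth_mem sorted_list_of_set.set_sorted_key_list_of_set subsetD)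
  have "iso (nths q C) (nths p (f ` C))"
    unfolding iso_def n1 n2 using e mem unfolding emb_def by auto
  moreover have "distinct (map fst (nths q C))"
    using emb_distinct[OF emb_nths[OF C, THEN conjunct1] emb_distinct[OF e d]] .
  moreover have "distinct (map fst (nths p (f ` C)))"
    using emb_distinct[OF emb_nths[OF fC, THEN conjunct1] d] .
  ultimately show ?thesis using iso_std_eq by blast
qed

lemma gridded_emb:
  assumes g: "gridded m n M p" and e: "emb f q p" and s: "stdp q"
  shows "gridded m n M q"
proof -
  have cell: "\<And>k. k < length q \<Longrightarrow> gcol q k = gcol p (f k) \<and> grow q k = grow p (f k) \<and> snd (q!k) = snd (p!(f k))"
    using e unfolding emb_def gcol_def grow_def by auto
  have val: "\<And>k l. k < length q \<Longrightarrow> l < length q \<Longrightarrow> gval q k < gval q l \<longleftrightarrow> gval p (f k) < gval p (f l)"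
    using e unfolding emb_def gval_def by auto
  have fl: "\<And>k. k < length q \<Longrightarrow> f k < length p" using e unfolding emb_def by auto
  have mono: "\<And>k l. k < l \<Longrightarrow> l < length q \<Longrightarrow> f k < f l" using e unfolding emb_def by auto
  have G: "distinct (map fst p) \<and> set (map fst p) = {0..<length p} \<and>
     (\<forall>x<length p. gcol p x < m \<and> grow p x < n) \<and>
     (\<forall>x y. x < y \<and> y < length p \<longrightarrow> gcol p x \<le> gcol p y) \<and>
     (\<forall>x<length p. \<forall>y<length p. gval p x < gval p y \<longrightarrow> grow p x \<le> grow p y) \<and>
     (\<forall>x<length p. M (gcol p x) (grow p x) \<noteq> 0) \<and>
     (\<forall>x y. x < y \<and> y < length p \<and> snd (p ! x) = snd (p ! y) \<longrightarrow>
        (M (gcol p x) (grow p x) = 1 \<longrightarrow> gval p x < gval p y) \<and>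
        (M (gcol p x) (grow p x) = -1 \<longrightarrow> gval p x > gval p y))"
    using g unfolding gridded_def by simp
  show ?thesis unfolding gridded_def
  proof (intro conjI allI impI)
    show "distinct (map fst q)" "set (map fst q) = {0..<length q}" using s unfolding stdp_def by auto
  next
    fix x assume x: "x < length q"
    show "gcol q x < m" "grow q x < n" "M (gcol q x) (grow q x) \<noteq> 0"
      using G cell[OF x] fl[OF x] by auto
  next
    fix x y assume "x < y \<and> y < length q"
    then show "gcol q x \<le> gcol q y" using G cell mono fl by (metis order.strict_trans)
  next
    fix x y assume x: "x < length q" and y: "y < length q" and v: "gval q x < gval q y"
    then show "grow q x \<le> grow q y" using G cell val fl by metis
  next
    fix x y assume a: "x < y \<and> y < length q \<and> snd (q ! x) = snd (q ! y)" and "M (gcol q x) (grow q x) = 1"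
    moreover have "x < length q" using a by simp
    ultimately show "gval q x < gval q y" using G cell val fl mono by metis
  next
    fix x y assume a: "x < y \<and> y < length q \<and> snd (q ! x) = snd (q ! y)" and "M (gcol q x) (grow q x) = -1"
    moreover have "x < length q" using a by simp
    ultimately show "gval q y < gval q x" using G cell val fl mono by metis
  qed
qed

lemma gridded_std_nths:
  assumes g: "gridded m n M p" and S: "S \<subseteq> {..<length p}"
  shows "gridded m n M (std (nths p S))"
proof -
  have d: "distinct (map fst p)" using g unfolding gridded_def by simp
  have d2: "distinct (map fst (nths p S))" using emb_distinct[OF emb_nths[OF S, THEN conjunct1] d] .
  show ?thesis using gridded_emb[OF g std_nths_emb[OF d S, THEN conjunct1] std_stdp[OF d2]] .
qed

definition prec :: "(nat \<Rightarrow> int) \<Rightarrow> (nat \<Rightarrow> int) \<Rightarrow> gperm \<Rightarrow> nat \<Rightarrow> nat \<Rightarrow> bool" where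
  "prec c r p x y \<longleftrightarrow> x < length p \<and> y < length p \<and>
    ((gcol p x = gcol p y \<and> (c (gcol p x) = 1 \<and> x < y \<or> c (gcol p x) = -1 \<and> y < x)) \<or>
     (grow p x = grow p y \<and> (r (grow p x) = 1 \<and> gval p x < gval p y \<or> r (grow p x) = -1 \<and> gval p y < gval p x)))"

lemma prec_emb:
  assumes e: "emb f q p" and k: "k < length q" and l: "l < length q"
  shows "prec c r q k l \<longleftrightarrow> prec c r p (f k) (f l)"
proof -
  have cell: "\<And>k. k < length q \<Longrightarrow> gcol q k = gcol p (f k) \<and> grow q k = grow p (f k)"
    using e unfolding emb_def gcol_def grow_def by auto
  have val: "gval q k < gval q l \<longleftrightarrow> gval p (f k) < gval p (f l)"
     "gval q l < gval q k \<longleftrightarrow> gval p (f l) < gval p (f k)"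
    using e k l unfolding emb_def gval_def by auto
  have fl: "f k < length p" "f l < length p" using e k l unfolding emb_def by auto
  show ?thesis unfolding prec_def using cell[OF k] cell[OF l] val fl k l emb_lt[OF e k l] emb_lt[OF e l k]
    by (simp only: simp_thms)
qed

lemma cond_iff:
  assumes cs: "\<forall>i<m. c i \<in> {-1, 1}" and rs: "\<forall>j<n. r j \<in> {-1, 1}"
    and g: "gridded m n M p" and x: "x < length p" and y: "y < length p" and xy: "x \<noteq> y"
  shows "((gcol p x = gcol p y \<longrightarrow>
              (c (gcol p x) = 1 \<longrightarrow> x < y) \<and> (c (gcol p x) = -1 \<longrightarrow> y < x)) \<and>
           (grow p x = grow p y \<longrightarrow>
              (r (grow p x) = 1 \<longrightarrow> gval p x < gval p y) \<and>
              (r (grow p x) = -1 \<longrightarrow> gval p y < gval p x))) \<longleftrightarrow> \<not> prec c r p y x"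
proof -
  have d: "gval p x \<noteq> gval p y" using g x y xy unfolding gridded_def gval_def
    by (simp add: distinct_conv_nth)
  have cm: "gcol p x < m" "grow p x < n" using g x unfolding gridded_def by auto
  have c1: "c (gcol p x) = 1 \<or> c (gcol p x) = -1" using cs cm by auto
  have r1: "r (grow p x) = 1 \<or> r (grow p x) = -1" using rs cm by auto
  have col: "(gcol p x = gcol p y \<longrightarrow> (c (gcol p x) = 1 \<longrightarrow> x < y) \<and> (c (gcol p x) = -1 \<longrightarrow> y < x))
     \<longleftrightarrow> \<not> (gcol p y = gcol p x \<and> (c (gcol p y) = 1 \<and> y < x \<or> c (gcol p y) = -1 \<and> x < y))"
  proof (cases "gcol p x = gcol p y")
    case True
    show ?thesis using c1 xy unfolding True by (cases "c (gcol p y) = 1") auto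
  qed auto
  have row: "(grow p x = grow p y \<longrightarrow> (r (grow p x) = 1 \<longrightarrow> gval p x < gval p y) \<and> (r (grow p x) = -1 \<longrightarrow> gval p y < gval p x))
     \<longleftrightarrow> \<not> (grow p y = grow p x \<and> (r (grow p y) = 1 \<and> gval p y < gval p x \<or> r (grow p y) = -1 \<and> gval p x < gval p y))"
  proof (cases "grow p x = grow p y")
    case True
    show ?thesis using r1 d unfolding True by (cases "r (grow p y) = 1") auto
  qed auto
  show ?thesis unfolding prec_def col row using x y by simp
qed

lemma msum2_split:
  assumes cs: "\<forall>i<m. c i \<in> {-1, 1}" and rs: "\<forall>j<n. r j \<in> {-1, 1}"
    and g: "gridded m n M p" and A: "A \<subseteq> {0..<length p}"
    and nb: "\<forall>x\<in>A. \<forall>y\<in>{0..<length p} - A. \<not> prec c r p y x"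
  shows "msum2 m n M c r (std (nths p A)) (std (nths p ({0..<length p} - A))) p"
proof -
  have cond: "\<forall>x\<in>A. \<forall>y\<in>{0..<length p} - A.
           (gcol p x = gcol p y \<longrightarrow>
              (c (gcol p x) = 1 \<longrightarrow> x < y) \<and> (c (gcol p x) = -1 \<longrightarrow> y < x)) \<and>
           (grow p x = grow p y \<longrightarrow>
              (r (grow p x) = 1 \<longrightarrow> gval p x < gval p y) \<and>
              (r (grow p x) = -1 \<longrightarrow> gval p y < gval p x))"
  proof (intro ballI)
    fix x y assume x: "x \<in> A" and y: "y \<in> {0..<length p} - A"
    have "x < length p" "y < length p" "x \<noteq> y" using x y A by auto
    then show "(gcol p x = gcol p y \<longrightarrow>
              (c (gcol p x) = 1 \<longrightarrow> x < y) \<and> (c (gcol p x) = -1 \<longrightarrow> y < x)) \<and>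
           (grow p x = grow p y \<longrightarrow>
              (r (grow p x) = 1 \<longrightarrow> gval p x < gval p y) \<and>
              (r (grow p x) = -1 \<longrightarrow> gval p y < gval p x))"
      using cond_iff[OF cs rs g] nb x y by blast
  qed
  have g1: "gridded m n M (std (nths p A))" using gridded_std_nths[OF g, of A] A by (simp add: atLeast0LessThan)
  have g2: "gridded m n M (std (nths p ({0..<length p} - A)))" using gridded_std_nths[OF g] by (simp add: atLeast0LessThan)
  show ?thesis unfolding msum2_def using g1 g2 g A cond by blast
qed

lemma msum2_noback:
  assumes cs: "\<forall>i<m. c i \<in> {-1, 1}" and rs: "\<forall>j<n. r j \<in> {-1, 1}"
    and ms: "msum2 m n M c r s t p"
  obtains A where "A \<subseteq> {0..<length p}" "s = std (nths p A)" "t = std (nths p ({0..<length p} - A))"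
    "\<forall>x\<in>A. \<forall>y\<in>{0..<length p} - A. \<not> prec c r p y x"
    "gridded m n M p" "gridded m n M s" "gridded m n M t"
proof -
  from ms obtain A where g: "gridded m n M s" "gridded m n M t" "gridded m n M p"
    and A: "A \<subseteq> {0..<length p}" "std (nths p A) = s" "std (nths p ({0..<length p} - A)) = t"
    and cond: "\<forall>x\<in>A. \<forall>y\<in>{0..<length p} - A.
           (gcol p x = gcol p y \<longrightarrow>
              (c (gcol p x) = 1 \<longrightarrow> x < y) \<and> (c (gcol p x) = -1 \<longrightarrow> y < x)) \<and>
           (grow p x = grow p y \<longrightarrow>
              (r (grow p x) = 1 \<longrightarrow> gval p x < gval p y) \<and>
              (r (grow p x) = -1 \<longrightarrow> gval p y < gval p x))"
    unfolding msum2_def by blast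
  have "\<forall>x\<in>A. \<forall>y\<in>{0..<length p} - A. \<not> prec c r p y x"
  proof (intro ballI)
    fix x y assume x: "x \<in> A" and y: "y \<in> {0..<length p} - A"
    have "x < length p" "y < length p" "x \<noteq> y" using x y A by auto
    then show "\<not> prec c r p y x" using cond_iff[OF cs rs g(3)] cond x y by blast
  qed
  then show ?thesis using that A g by blast
qed

lemma rt_cross:
  assumes "R\<^sup>*\<^sup>* b a" "b \<notin> A" "a \<in> A"
  shows "\<exists>y z. R y z \<and> y \<notin> A \<and> z \<in> A"
  using assms by (induction rule: rtranclp_induct) auto

lemma reach_emb:
  assumes e: "emb f q p"
  shows "(prec c r q)\<^sup>*\<^sup>* k l \<Longrightarrow> (prec c r p)\<^sup>*\<^sup>* (f k) (f l)"
proof (induction rule: rtranclp_induct)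
  case base then show ?case by (rule rtranclp.rtrancl_refl)
next
  case (step y z)
  have "y < length q" "z < length q" using step(2) unfolding prec_def by auto
  then have "prec c r p (f y) (f z)" using prec_emb[OF e] step(2) by blast
  then show ?case using step(3) by (rule rtranclp.rtrancl_into_rtrancl[rotated])
qed

lemma reach_emb_back:
  assumes e: "emb f q p" and S: "S = f ` {..<length q}"
    and rs: "(\<lambda>a b. prec c r p a b \<and> a \<in> S \<and> b \<in> S)\<^sup>*\<^sup>* a b"
  shows "\<forall>k<length q. f k = a \<longrightarrow> (\<forall>l<length q. f l = b \<longrightarrow> (prec c r q)\<^sup>*\<^sup>* k l)"
  using rs
proof (induction rule: rtranclp_induct)
  case base
  then show ?case using emb_eq[OF e] by auto
next
  case (step y z)
  show ?case
  proof (intro allI impI)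
    fix k l assume k: "k < length q" "f k = a" and l: "l < length q" "f l = z"
    obtain j where j: "j < length q" "f j = y" using step(2) S by auto
    have "(prec c r q)\<^sup>*\<^sup>* k j" using step(3) k j by blast
    moreover have "prec c r q j l" using prec_emb[OF e j(1)] l j step(2) by auto
    ultimately show "(prec c r q)\<^sup>*\<^sup>* k l" by simp
  qed
qed

lemma restrict_succ:
  assumes "R\<^sup>*\<^sup>* x y" "x \<in> S" "\<forall>a b. R a b \<and> a \<in> S \<longrightarrow> b \<in> S"
  shows "(\<lambda>a b. R a b \<and> a \<in> S \<and> b \<in> S)\<^sup>*\<^sup>* x y \<and> y \<in> S"
  using assms by (induction rule: rtranclp_induct) (auto intro: rtranclp.rtrancl_into_rtrancl)

lemma restrict_pred:
  assumes "R\<^sup>*\<^sup>* x y" "y \<in> S" "\<forall>a b. R a b \<and> b \<in> S \<longrightarrow> a \<in> S"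
  shows "(\<lambda>a b. R a b \<and> a \<in> S \<and> b \<in> S)\<^sup>*\<^sup>* x y \<and> x \<in> S"
  using assms by (induction rule: converse_rtranclp_induct) (auto intro: converse_rtranclp_into_rtranclp)

lemma indiv_iff:
  assumes cs: "\<forall>i<m. c i \<in> {-1, 1}" and rs: "\<forall>j<n. r j \<in> {-1, 1}"
    and g: "gridded m n M q"
  shows "indivisible m n M c r q \<longleftrightarrow> q \<noteq> [] \<and> (\<forall>x<length q. \<forall>y<length q. (prec c r q)\<^sup>*\<^sup>* x y)"
proof
  assume ind: "indivisible m n M c r q"
  then have ne: "q \<noteq> []" unfolding indivisible_def by simp
  have "\<forall>x<length q. \<forall>y<length q. (prec c r q)\<^sup>*\<^sup>* x y"
  proof (rule ccontr)
    assume "\<not> ?thesis"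
    then obtain a b where a: "a < length q" and b: "b < length q" and nr: "\<not> (prec c r q)\<^sup>*\<^sup>* b a" by blast
    define A1 where "A1 = {z. z < length q \<and> (prec c r q)\<^sup>*\<^sup>* z a}"
    have A1: "A1 \<subseteq> {0..<length q}" unfolding A1_def by auto
    have aA: "a \<in> A1" using a unfolding A1_def by simp
    have bA: "b \<in> {0..<length q} - A1" using b nr unfolding A1_def by simp
    have nb: "\<forall>x\<in>A1. \<forall>y\<in>{0..<length q} - A1. \<not> prec c r q y x"
      unfolding A1_def by (auto intro: converse_rtranclp_into_rtranclp)
    have ms: "msum2 m n M c r (std (nths q A1)) (std (nths q ({0..<length q} - A1))) q"
      by (rule msum2_split[OF cs rs g A1 nb])
    have d: "distinct (map fst q)" using g unfolding gridded_def by simp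
    have l1: "length (std (nths q A1)) = card A1" using std_nths_emb[OF d, of A1] A1 by (simp add: atLeast0LessThan)
    have l2: "length (std (nths q ({0..<length q} - A1))) = card ({0..<length q} - A1)"
      using std_nths_emb[OF d, of "{0..<length q} - A1"] by (auto simp: atLeast0LessThan)
    have "card A1 \<noteq> 0" using aA A1 by (metis card_0_eq empty_iff finite_atLeastLessThan finite_subset)
    moreover have "card ({0..<length q} - A1) \<noteq> 0" using bA by (metis card_0_eq empty_iff finite_Diff finite_atLeastLessThan)
    ultimately have "std (nths q A1) \<noteq> []" "std (nths q ({0..<length q} - A1)) \<noteq> []"
      using l1 l2 by (metis length_0_conv)+
    then have "divisible m n M c r q" unfolding divisible_def using ms by blast
    then show False using ind unfolding indivisible_def by simp
  qed
  then show "q \<noteq> [] \<and> (\<forall>x<length q. \<forall>y<length q. (prec c r q)\<^sup>*\<^sup>* x y)" using ne by simp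
next
  assume h: "q \<noteq> [] \<and> (\<forall>x<length q. \<forall>y<length q. (prec c r q)\<^sup>*\<^sup>* x y)"
  have "\<not> divisible m n M c r q"
  proof
    assume "divisible m n M c r q"
    then obtain s t where st: "s \<noteq> []" "t \<noteq> []" and ms: "msum2 m n M c r s t q"
      unfolding divisible_def by blast
    obtain A where A: "A \<subseteq> {0..<length q}" "s = std (nths q A)" "t = std (nths q ({0..<length q} - A))"
      and nb: "\<forall>x\<in>A. \<forall>y\<in>{0..<length q} - A. \<not> prec c r q y x"
      using msum2_noback[OF cs rs ms] by blast
    have d: "distinct (map fst q)" using g unfolding gridded_def by simp
    have "length (std (nths q A)) = card A" using A std_nths_emb[OF d, of A] by (auto simp: atLeast0LessThan)
    then have "card A \<noteq> 0" using st A by (metis length_0_conv)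
    then obtain a where a: "a \<in> A" by (metis card.empty ex_in_conv)
    have "length (std (nths q ({0..<length q} - A))) = card ({0..<length q} - A)" using std_nths_emb[OF d, of "{0..<length q} - A"] by (auto simp: atLeast0LessThan)
    then have "card ({0..<length q} - A) \<noteq> 0" using st A by (metis length_0_conv)
    then obtain b where b: "b \<in> {0..<length q} - A" by (metis card.empty ex_in_conv)
    have "(prec c r q)\<^sup>*\<^sup>* b a" using h a b A by auto
    then obtain y z where "prec c r q y z" "y \<notin> A" "z \<in> A" using rt_cross b a by (metis DiffD2)
    moreover then have "y < length q" unfolding prec_def by simp
    ultimately show False using nb by auto
  qed
  then show "indivisible m n M c r q" using h g unfolding indivisible_def by simp
qed

definition scc :: "(nat \<Rightarrow> int) \<Rightarrow> (nat \<Rightarrow> int) \<Rightarrow> gperm \<Rightarrow> nat \<Rightarrow> nat set" where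
  "scc c r p x = {y. y < length p \<and> (prec c r p)\<^sup>*\<^sup>* x y \<and> (prec c r p)\<^sup>*\<^sup>* y x}"

definition sccs :: "(nat \<Rightarrow> int) \<Rightarrow> (nat \<Rightarrow> int) \<Rightarrow> gperm \<Rightarrow> nat set set" where
  "sccs c r p = scc c r p ` {..<length p}"

lemma sl_image:
  assumes "finite S"
  shows "(\<lambda>k. sorted_list_of_set S ! k) ` {..<card S} = S"
proof -
  have "set (sorted_list_of_set S) = S" "length (sorted_list_of_set S) = card S" using assms by auto
  moreover have "(\<lambda>k. sorted_list_of_set S ! k) ` {..<length (sorted_list_of_set S)} = set (sorted_list_of_set S)"
    by (auto simp: in_set_conv_nth)
  ultimately show ?thesis by simp
qed

lemma char:
  assumes cs: "\<forall>i<m. c i \<in> {-1, 1}" and rs: "\<forall>j<n. r j \<in> {-1, 1}"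
  shows "msum_list m n M c r ps p \<Longrightarrow> (\<forall>q\<in>set ps. indivisible m n M c r q) \<Longrightarrow>
    mset ps = image_mset (\<lambda>B. std (nths p B)) (mset_set (sccs c r p))"
proof (induction ps arbitrary: p)
  case Nil
  then show ?case by (simp add: sccs_def)
next
  case (Cons q ps)
  from Cons.prems(1) obtain u where mu: "msum_list m n M c r ps u" and ms: "msum2 m n M c r q u p"
    unfolding msum_list.simps by blast
  obtain A where A: "A \<subseteq> {0..<length p}" and qA: "q = std (nths p A)"
    and uR: "u = std (nths p ({0..<length p} - A))"
    and nb: "\<forall>x\<in>A. \<forall>y\<in>{0..<length p} - A. \<not> prec c r p y x"
    and gp: "gridded m n M p" and gq: "gridded m n M q" and gu: "gridded m n M u"
    using msum2_noback[OF cs rs ms] by blast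
  define R where "R = {0..<length p} - A"
  have IH: "mset ps = image_mset (\<lambda>C. std (nths u C)) (mset_set (sccs c r u))"
    using Cons.IH[OF mu] Cons.prems(2) by simp
  have d: "distinct (map fst p)" using gp unfolding gridded_def by simp
  define e where "e = (\<lambda>k. sorted_list_of_set R ! k)"
  define eA where "eA = (\<lambda>k. sorted_list_of_set A ! k)"
  have A': "A \<subseteq> {..<length p}" and R': "R \<subseteq> {..<length p}" using A unfolding R_def by auto
  have eu: "emb e u p" and lu: "length u = card R"
    using std_nths_emb[OF d R'] unfolding uR R_def e_def by auto
  have eq: "emb eA q p" and lq: "length q = card A"
    using std_nths_emb[OF d A'] unfolding qA eA_def by auto
  have finA: "finite A" and finR: "finite R" using A' R' finite_subset by auto
  have imR: "e ` {..<length u} = R" using sl_image[OF finR] lu unfolding e_def by simp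
  have imA: "eA ` {..<length q} = A" using sl_image[OF finA] lq unfolding eA_def by simp
  have indq: "indivisible m n M c r q" using Cons.prems(2) by simp
  then have scq: "q \<noteq> []" "\<forall>x<length q. \<forall>y<length q. (prec c r q)\<^sup>*\<^sup>* x y"
    using indiv_iff[OF cs rs gq] by auto
  have Ane: "A \<noteq> {}" using scq(1) lq finA by auto
  have succR: "\<forall>a b. prec c r p a b \<and> a \<in> R \<longrightarrow> b \<in> R"
  proof (intro allI impI)
    fix a b assume ab: "prec c r p a b \<and> a \<in> R"
    then have "b < length p" unfolding prec_def by blast
    then show "b \<in> R" using ab nb unfolding R_def by auto
  qed
  have sccA: "scc c r p x = A" if x: "x \<in> A" for x
  proof
    show "A \<subseteq> scc c r p x"
    proof
      fix y assume y: "y \<in> A"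
      obtain k where k: "k < length q" "eA k = x" using x imA by auto
      obtain l where l: "l < length q" "eA l = y" using y imA by auto
      have "(prec c r p)\<^sup>*\<^sup>* x y" "(prec c r p)\<^sup>*\<^sup>* y x"
        using reach_emb[OF eq] scq(2) k l by metis+
      then show "y \<in> scc c r p x" unfolding scc_def using y A by auto
    qed
  next
    show "scc c r p x \<subseteq> A"
    proof
      fix y assume y: "y \<in> scc c r p x"
      show "y \<in> A"
      proof (rule ccontr)
        assume "y \<notin> A"
        moreover have "(prec c r p)\<^sup>*\<^sup>* y x" using y unfolding scc_def by simp
        ultimately obtain a b where "prec c r p a b" "a \<notin> A" "b \<in> A" using rt_cross x by metis
        moreover then have "a < length p" unfolding prec_def by simp
        ultimately show False using nb by auto
      qed
    qed
  qed
  have sccR: "scc c r p (e k) = e ` scc c r u k" if k: "k < length u" for k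
  proof
    show "e ` scc c r u k \<subseteq> scc c r p (e k)"
    proof
      fix y assume "y \<in> e ` scc c r u k"
      then obtain l where l: "l \<in> scc c r u k" and y: "y = e l" by auto
      have "l < length u" "(prec c r u)\<^sup>*\<^sup>* k l" "(prec c r u)\<^sup>*\<^sup>* l k" using l unfolding scc_def by auto
      then show "y \<in> scc c r p (e k)" unfolding scc_def y using reach_emb[OF eu] eu unfolding emb_def by blast
    qed
  next
    show "scc c r p (e k) \<subseteq> e ` scc c r u k"
    proof
      fix y assume y: "y \<in> scc c r p (e k)"
      have ekR: "e k \<in> R" using imR k by auto
      have r1: "(prec c r p)\<^sup>*\<^sup>* (e k) y" and r2: "(prec c r p)\<^sup>*\<^sup>* y (e k)" using y unfolding scc_def by auto
      from restrict_succ[OF r1 ekR succR] have rr1: "(\<lambda>a b. prec c r p a b \<and> a \<in> R \<and> b \<in> R)\<^sup>*\<^sup>* (e k) y" and yR: "y \<in> R"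
        by auto
      from restrict_succ[OF r2 yR succR] have rr2: "(\<lambda>a b. prec c r p a b \<and> a \<in> R \<and> b \<in> R)\<^sup>*\<^sup>* y (e k)"
        by auto
      obtain l where l: "l < length u" "e l = y" using yR imR by auto
      have "(prec c r u)\<^sup>*\<^sup>* k l" using reach_emb_back[OF eu imR[symmetric] rr1] k l by blast
      moreover have "(prec c r u)\<^sup>*\<^sup>* l k" using reach_emb_back[OF eu imR[symmetric] rr2] k l by blast
      ultimately have "l \<in> scc c r u k" unfolding scc_def using l by simp
      then show "y \<in> e ` scc c r u k" using l by auto
    qed
  qed
  have split: "{..<length p} = A \<union> R" using A unfolding R_def by auto
  have S1: "scc c r p ` A = {A}" using sccA Ane by auto
  have S2: "scc c r p ` R = (\<lambda>C. e ` C) ` sccs c r u"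
  proof -
    have "scc c r p ` R = scc c r p ` e ` {..<length u}" using imR by simp
    also have "\<dots> = (\<lambda>k. e ` scc c r u k) ` {..<length u}" using sccR by (auto simp: image_image)
    also have "\<dots> = (\<lambda>C. e ` C) ` sccs c r u" unfolding sccs_def by (auto simp: image_image)
    finally show ?thesis .
  qed
  have sp: "sccs c r p = insert A ((\<lambda>C. e ` C) ` sccs c r u)"
    unfolding sccs_def split image_Un S1 S2[unfolded sccs_def] by simp
  have sub: "\<And>C. C \<in> sccs c r u \<Longrightarrow> C \<subseteq> {..<length u}" unfolding sccs_def scc_def by auto
  have notA: "A \<notin> (\<lambda>C. e ` C) ` sccs c r u"
  proof
    assume "A \<in> (\<lambda>C. e ` C) ` sccs c r u"
    then obtain k where k: "k < length u" and Aeq: "A = e ` scc c r u k" unfolding sccs_def by auto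
    have "k \<in> scc c r u k" using k unfolding scc_def by simp
    then have "e k \<in> A" using Aeq by auto
    moreover have "e k \<in> R" using imR k by auto
    ultimately show False unfolding R_def by simp
  qed
  have injE: "inj_on e {..<length u}" using emb_eq[OF eu] by (auto simp: inj_on_def)
  have inj: "inj_on (\<lambda>C. e ` C) (sccs c r u)"
    using inj_on_image_eq_iff[OF injE] sub by (auto simp: inj_on_def)
  have fin: "finite (sccs c r u)" unfolding sccs_def by simp
  have "image_mset (\<lambda>B. std (nths p B)) (mset_set (sccs c r p))
      = add_mset (std (nths p A)) (image_mset (\<lambda>B. std (nths p B)) (mset_set ((\<lambda>C. e ` C) ` sccs c r u)))"
    unfolding sp using notA fin by simp
  also have "mset_set ((\<lambda>C. e ` C) ` sccs c r u) = image_mset (\<lambda>C. e ` C) (mset_set (sccs c r u))"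
    using image_mset_mset_set[OF inj] by simp
  also have "image_mset (\<lambda>B. std (nths p B)) (image_mset (\<lambda>C. e ` C) (mset_set (sccs c r u)))
      = image_mset (\<lambda>C. std (nths u C)) (mset_set (sccs c r u))"
  proof -
    have "image_mset (\<lambda>B. std (nths p B)) (image_mset (\<lambda>C. e ` C) (mset_set (sccs c r u)))
       = image_mset (\<lambda>C. std (nths p (e ` C))) (mset_set (sccs c r u))" by (simp add: multiset.map_comp comp_def)
    also have "\<dots> = image_mset (\<lambda>C. std (nths u C)) (mset_set (sccs c r u))"
    proof (rule image_mset_cong)
      fix C assume "C \<in># mset_set (sccs c r u)"
      then have "C \<in> sccs c r u" using fin by simp
      then show "std (nths p (e ` C)) = std (nths u C)" using emb_std_nths[OF eu d sub] by simp
    qed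
    finally show ?thesis .
  qed
  finally show ?case using IH qA by simp
qed

lemma exist:
  assumes cs: "\<forall>i<m. c i \<in> {-1, 1}" and rs: "\<forall>j<n. r j \<in> {-1, 1}"
  shows "gridded m n M p \<Longrightarrow> \<exists>ps. (\<forall>q\<in>set ps. indivisible m n M c r q) \<and> msum_list m n M c r ps p"
proof (induction "length p" arbitrary: p rule: less_induct)
  case less
  show ?case
  proof (cases "p = []")
    case True
    then show ?thesis by (intro exI[of _ "[]"]) simp
  next
    case False
    define anc where "anc = (\<lambda>x. {y. y < length p \<and> (prec c r p)\<^sup>*\<^sup>* y x})"
    have "0 < length p" using False by simp
    from ex_has_least_nat[of "\<lambda>x. x < length p" 0 "\<lambda>x. card (anc x)", OF this]
    obtain x0 where x0: "x0 < length p" and mn: "\<And>y. y < length p \<Longrightarrow> card (anc x0) \<le> card (anc y)"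
      by blast
    define A where "A = anc x0"
    define R where "R = {0..<length p} - A"
    have financ: "\<And>x. finite (anc x)" unfolding anc_def by simp
    have A: "A \<subseteq> {0..<length p}" unfolding A_def anc_def by auto
    have x0A: "x0 \<in> A" unfolding A_def anc_def using x0 by simp
    have predA: "\<forall>a b. prec c r p a b \<and> b \<in> A \<longrightarrow> a \<in> A"
    proof (intro allI impI)
      fix a b assume ab: "prec c r p a b \<and> b \<in> A"
      then have "a < length p" unfolding prec_def by blast
      moreover have "(prec c r p)\<^sup>*\<^sup>* a x0" using ab unfolding A_def anc_def
        by (auto intro: converse_rtranclp_into_rtranclp)
      ultimately show "a \<in> A" unfolding A_def anc_def by simp
    qed
    have nb: "\<forall>x\<in>A. \<forall>y\<in>{0..<length p} - A. \<not> prec c r p y x"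
      using predA by blast
    have ms: "msum2 m n M c r (std (nths p A)) (std (nths p R)) p"
      unfolding R_def by (rule msum2_split[OF cs rs less.prems A nb])
    have d: "distinct (map fst p)" using less.prems unfolding gridded_def by simp
    have A': "A \<subseteq> {..<length p}" and R': "R \<subseteq> {..<length p}" using A unfolding R_def by auto
    have finA: "finite A" using A' finite_subset by auto
    define q where "q = std (nths p A)"
    define u where "u = std (nths p R)"
    define eA where "eA = (\<lambda>k. sorted_list_of_set A ! k)"
    have lu: "length u = card R" using std_nths_emb[OF d R'] unfolding u_def by (simp only: length_std)
    have "x0 \<notin> R" using x0A unfolding R_def by simp
    moreover have "x0 \<in> {0..<length p}" using x0 by simp
    moreover have "R \<subseteq> {0..<length p}" unfolding R_def by (rule Diff_subset)
    ultimately have "R \<subset> {0..<length p}" by blast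
    then have "card R < card {0..<length p}"
      by (rule psubset_card_mono[rotated]) simp
    then have lt: "length u < length p" using lu by simp
    have gu: "gridded m n M u" unfolding u_def by (rule gridded_std_nths[OF less.prems R'])
    obtain ps where ps: "\<forall>q\<in>set ps. indivisible m n M c r q" "msum_list m n M c r ps u"
      using less.hyps[OF lt gu] by blast
    have eq: "emb eA q p" and lq: "length q = card A"
      using std_nths_emb[OF d A'] unfolding q_def eA_def by auto
    have imA: "eA ` {..<length q} = A" using sl_image[OF finA] lq unfolding eA_def by simp
    have gq: "gridded m n M q" unfolding q_def by (rule gridded_std_nths[OF less.prems A'])
    have allA: "(prec c r p)\<^sup>*\<^sup>* y z" if y: "y \<in> A" and z: "z \<in> A" for y z
    proof -
      have sameanc: "anc w = A" if w: "w \<in> A" for w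
      proof -
        have sub: "anc w \<subseteq> A"
        proof
          fix v assume "v \<in> anc w"
          then have v: "v < length p" "(prec c r p)\<^sup>*\<^sup>* v w" by (simp_all add: anc_def)
          have "(prec c r p)\<^sup>*\<^sup>* w x0" using w by (simp add: A_def anc_def)
          then have "(prec c r p)\<^sup>*\<^sup>* v x0" using v(2) by (rule rtranclp_trans[rotated])
          then show "v \<in> A" using v(1) by (simp add: A_def anc_def)
        qed
        have "w < length p" using w by (simp add: A_def anc_def)
        then have "card A \<le> card (anc w)" using mn unfolding A_def by blast
        moreover have "card (anc w) \<le> card A" by (rule card_mono[OF finA sub])
        ultimately have "card (anc w) = card A" by simp
        then show ?thesis using card_subset_eq[OF finA sub] by simp
      qed
      have "(prec c r p)\<^sup>*\<^sup>* y x0" using y unfolding A_def anc_def by simp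
      moreover have "x0 \<in> anc z" using sameanc[OF z] x0A by simp
      then have "(prec c r p)\<^sup>*\<^sup>* x0 z" by (simp add: anc_def)
      ultimately show ?thesis by (rule rtranclp_trans)
    qed
    have scq: "\<forall>x<length q. \<forall>y<length q. (prec c r q)\<^sup>*\<^sup>* x y"
    proof (intro allI impI)
      fix k l assume k: "k < length q" and l: "l < length q"
      have "eA k \<in> A" "eA l \<in> A" using imA k l by auto
      then have "(prec c r p)\<^sup>*\<^sup>* (eA k) (eA l)" using allA by blast
      then have "(\<lambda>a b. prec c r p a b \<and> a \<in> A \<and> b \<in> A)\<^sup>*\<^sup>* (eA k) (eA l)"
        using restrict_pred[OF _ \<open>eA l \<in> A\<close> predA] by blast
      then show "(prec c r q)\<^sup>*\<^sup>* k l" using reach_emb_back[OF eq imA[symmetric]] k l by blast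
    qed
    have "card A \<noteq> 0" using x0A finA by (metis card_0_eq empty_iff)
    then have "q \<noteq> []" using lq by (metis length_0_conv)
    then have indq: "indivisible m n M c r q" using indiv_iff[OF cs rs gq] scq by blast
    have "msum_list m n M c r (q # ps) p" unfolding msum_list.simps using ps(2) ms[folded q_def u_def] by blast
    then show ?thesis using indq ps(1) by (intro exI[of _ "q # ps"]) auto
  qed
qed

theorem lemma3p4:
  fixes m n :: nat and M :: "nat \<Rightarrow> nat \<Rightarrow> int" and c r :: "nat \<Rightarrow> int" and p :: gperm
  assumes entries: "\<forall>i<m. \<forall>j<n. M i j \<in> {-1, 0, 1}"
    and c_sign: "\<forall>i<m. c i \<in> {-1, 1}"
    and r_sign: "\<forall>j<n. r j \<in> {-1, 1}"
    and pmm: "\<forall>i<m. \<forall>j<n. M i j \<noteq> 0 \<longrightarrow> M i j = c i * r j"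
    and grid: "gridded m n M p"
  shows "(\<exists>ps. (\<forall>q\<in>set ps. indivisible m n M c r q) \<and> msum_list m n M c r ps p) \<and>
         (\<forall>ps qs. (\<forall>q\<in>set ps. indivisible m n M c r q) \<and> msum_list m n M c r ps p \<and>
                  (\<forall>q\<in>set qs. indivisible m n M c r q) \<and> msum_list m n M c r qs p
                  \<longrightarrow> length ps = length qs \<and> mset ps = mset qs)"
proof (intro conjI allI impI)
  show "\<exists>ps. (\<forall>q\<in>set ps. indivisible m n M c r q) \<and> msum_list m n M c r ps p"
    by (rule exist[OF c_sign r_sign grid])
next
  fix ps qs
  assume h: "(\<forall>q\<in>set ps. indivisible m n M c r q) \<and> msum_list m n M c r ps p \<and>
                  (\<forall>q\<in>set qs. indivisible m n M c r q) \<and> msum_list m n M c r qs p"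
  have "mset ps = image_mset (\<lambda>B. std (nths p B)) (mset_set (sccs c r p))"
    using char[OF c_sign r_sign] h by blast
  moreover have "mset qs = image_mset (\<lambda>B. std (nths p B)) (mset_set (sccs c r p))"
    using char[OF c_sign r_sign] h by blast
  ultimately have e: "mset ps = mset qs" by simp
  then show "mset ps = mset qs" .
  show "length ps = length qs" using e by (metis size_mset)
qed

end
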